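(* Let $\delta_1,\delta_2,\delta_3>0$ with $\delta_3>2\delta_2$. There is a constant $C$ such that for all $n\ge1$, on the event $A_n$, $$|I_n^0|\le C\,n^{-\frac34+\frac{\delta_1}{2}}.$$
   Context: $Y$ is a simple symmetric random walk on $\mathbb Z$ with $Y_0=0$, with local time $\eta_n(y)=\sum_{k=0}^n\mathbf 1_{\{Y_k=y\}}$. $A_n=\{\max_{0\le k\le2n}|Y_k|<n^{1/2+\delta_1}\}\cap\{\max_{y\in\mathbb Z}\eta_{2n-1}(y)<n^{1/2+\delta_2}\}$. Set $d_{n,3}=n^{1/2+\delta_3}$, $b_n=n^{\delta_2}/d_{n,3}$, and $$I_n^0=\int_{|t|\le b_n}\prod_{y\in\mathbb Z}\cos\big(\eta_{2n-1}(y)\,t\big)\,e^{-t^2d_{n,3}^2/2}\,dt$$ (only finitely many factors differ from $1$). *)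

theory Defs
  imports "HOL-Analysis.Analysis"
begin

text \<open>Paths of a simple symmetric random walk on the integers started at 0.
  The statement holds pathwise on the event A_n, so we quantify over all such paths.\<close>
definition srw_path :: "(nat \<Rightarrow> int) \<Rightarrow> bool" where
  "srw_path Y \<longleftrightarrow> Y 0 = 0 \<and> (\<forall>k. \<bar>Y (Suc k) - Y k\<bar> = 1)"

definition local_time :: "(nat \<Rightarrow> int) \<Rightarrow> nat \<Rightarrow> int \<Rightarrow> nat" where
  "local_time Y n y = card {k \<in> {0..n}. Y k = y}"

definition event_A :: "real \<Rightarrow> real \<Rightarrow> (nat \<Rightarrow> int) \<Rightarrow> nat \<Rightarrow> bool" where
  "event_A \<delta>1 \<delta>2 Y n \<longleftrightarrow>
     (\<forall>k\<le>2*n. real_of_int \<bar>Y k\<bar> < real n powr (1/2 + \<delta>1)) \<and>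
     (\<forall>y. real (local_time Y (2*n - 1) y) < real n powr (1/2 + \<delta>2))"

definition d3 :: "real \<Rightarrow> nat \<Rightarrow> real" where
  "d3 \<delta>3 n = real n powr (1/2 + \<delta>3)"

definition bn :: "real \<Rightarrow> real \<Rightarrow> nat \<Rightarrow> real" where
  "bn \<delta>2 \<delta>3 n = real n powr \<delta>2 / d3 \<delta>3 n"

text \<open>I_n^0; the product over Z is taken over the finitely many sites with nonzero local time
  (all other factors equal cos 0 = 1).\<close>
definition I0 :: "real \<Rightarrow> real \<Rightarrow> (nat \<Rightarrow> int) \<Rightarrow> nat \<Rightarrow> real" where
  "I0 \<delta>2 \<delta>3 Y n = integral {- bn \<delta>2 \<delta>3 n .. bn \<delta>2 \<delta>3 n}
     (\<lambda>t. (\<Prod>y\<in>{y. local_time Y (2*n - 1) y \<noteq> 0}. cos (real (local_time Y (2*n - 1) y) * t))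
          * exp (- (t^2 * (d3 \<delta>3 n)^2) / 2))"

end

theory Submission
  imports Defs
begin
lemma cos_quart: "cos (x::real) \<le> 1 - x^2/2 + x^4/24"
proof -
  obtain t where t: "cos x = (\<Sum>m<4. cos_coeff m * x ^ m) + (cos(t + 1/2 * real 4 * pi) / fact 4) * x ^ 4"
    using Maclaurin_cos_expansion[of x 4] by blast
  have s: "(\<Sum>m<4. cos_coeff m * x ^ m) = 1 - x^2/2"
    proof -
    have "cos_coeff 1 = 0" "cos_coeff 3 = 0" "cos_coeff 0 = 1" "cos_coeff 2 = -1/2"
      by (simp_all add: cos_coeff_def)
    then show ?thesis by (simp add: eval_nat_numeral)
  qed
  have "(cos(t + 1/2 * real 4 * pi) / fact 4) * x ^ 4 \<le> x^4/24"
  proof -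
    have "cos(t + 1/2 * real 4 * pi) \<le> 1" by simp
    moreover have "(fact 4::real) = 24" by (simp add: numeral_eq_Suc)
    moreover have "0 \<le> x^4" by (simp add: zero_le_even_power)
    ultimately show ?thesis using mult_right_mono[OF cos_le_one[of t] \<open>0 \<le> x^4\<close>] by simp
  qed
  then show ?thesis using t s by linarith
qed

lemma abs_cos_le_exp: assumes "\<bar>x::real\<bar> \<le> 1" shows "\<bar>cos x\<bar> \<le> exp (- (x^2/4))"
proof -
  have "pi/2 \<ge> 1" using pi_gt3 by linarith
  hence c0: "cos x \<ge> 0" using assms by (intro cos_ge_zero) auto
  have x2: "x^2 \<le> 1" using power_le_one[of "\<bar>x\<bar>" 2] assms by simp
  have "x^4 = x^2 * x^2" by algebra
  also have "\<dots> \<le> x^2 * 1" using x2 by (intro mult_left_mono) auto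
  finally have "x^4 \<le> x^2" by simp
  hence "cos x \<le> 1 + (- (x^2/4))" using cos_quart[of x] zero_le_power2[of x] by linarith
  also have "\<dots> \<le> exp (- (x^2/4))" by (rule exp_ge_add_one_self)
  finally show ?thesis using c0 by simp
qed

lemma arctan_int:
  assumes a: "a > (0::real)" and b: "b \<ge> 0"
  shows "((\<lambda>t. 1 / (1 + a * t^2)) has_integral
           (arctan (sqrt a * b) / sqrt a - arctan (sqrt a * (-b)) / sqrt a)) {-b..b}"
proof -
  have D: "\<forall>x\<in>{- b..b}. ((\<lambda>t. arctan (sqrt a * t) / sqrt a) has_vector_derivative 1 / (1 + a * x\<^sup>2))
         (at x within {- b..b})"
  proof
    fix x assume "x \<in> {-b..b}"
    have sa: "sqrt a > 0" "sqrt a * sqrt a = a" using a by auto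
    have "((\<lambda>t. arctan (sqrt a * t) / sqrt a) has_real_derivative 1 / (1 + a * x\<^sup>2)) (at x within {-b..b})"
    proof -
      have e: "(inverse (1 + (sqrt a * x)\<^sup>2) * (0 * x + 1 * sqrt a) * sqrt a - arctan (sqrt a * x) * 0) /
          (sqrt a * sqrt a) = 1 / (1 + a * x\<^sup>2)"
      proof -
        have p: "1 + a * x\<^sup>2 > 0" using a by (simp add: add_pos_nonneg)
        have "(inverse (1 + (sqrt a * x)\<^sup>2) * (0 * x + 1 * sqrt a) * sqrt a - arctan (sqrt a * x) * 0) /
          (sqrt a * sqrt a) = inverse (1 + a * x\<^sup>2) * (sqrt a * sqrt a) / a"
          using sa by (simp add: power_mult_distrib mult.assoc del: real_sqrt_mult_self)
        also have "\<dots> = 1 / (1 + a * x\<^sup>2)" using sa a p by (simp add: divide_simps)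
        finally show ?thesis .
      qed
      show ?thesis by (rule derivative_eq_intros refl e | use sa in simp)+
    qed
    then have "((\<lambda>t. arctan (sqrt a * t) / sqrt a) has_vector_derivative 1 / (1 + a * x\<^sup>2))
         (at x within {- b..b})" by (simp add: has_real_derivative_iff_has_vector_derivative)
    then show "((\<lambda>t. arctan (sqrt a * t) / sqrt a) has_vector_derivative 1 / (1 + a * x\<^sup>2))
         (at x within {- b..b})" .
  qed
  show ?thesis
    using fundamental_theorem_of_calculus[of "-b" b "\<lambda>t. arctan (sqrt a * t) / sqrt a" "\<lambda>t. 1 / (1 + a * t^2)"] D b
    by simp
qed

lemma arctan_int_bound:
  assumes a: "a > (0::real)" and b: "b \<ge> 0"
  shows "(\<lambda>t. 1 / (1 + a * t^2)) integrable_on {-b..b}"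
    "integral {-b..b} (\<lambda>t. 1 / (1 + a * t^2)) \<le> pi / sqrt a"
proof -
  note h = arctan_int[OF a b]
  show "(\<lambda>t. 1 / (1 + a * t^2)) integrable_on {-b..b}" using h by blast
  have "integral {-b..b} (\<lambda>t. 1 / (1 + a * t^2)) = (arctan (sqrt a * b) - arctan (sqrt a * (-b))) / sqrt a"
    using h by (simp add: integral_unique diff_divide_distrib)
  also have "\<dots> \<le> pi / sqrt a"
    using arctan_bounded[of "sqrt a * b"] arctan_bounded[of "sqrt a * (-b)"] a
    by (intro divide_right_mono) auto
  finally show "integral {-b..b} (\<lambda>t. 1 / (1 + a * t^2)) \<le> pi / sqrt a" .
qed

theorem lemma6:
  fixes \<delta>1 \<delta>2 \<delta>3 :: real
  assumes "\<delta>1 > 0" "\<delta>2 > 0" "\<delta>3 > 0" "\<delta>3 > 2 * \<delta>2"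
  shows "\<exists>C::real. \<forall>n::nat. \<forall>Y. n \<ge> 1 \<longrightarrow> srw_path Y \<longrightarrow> event_A \<delta>1 \<delta>2 Y n \<longrightarrow>
           \<bar>I0 \<delta>2 \<delta>3 Y n\<bar> \<le> C * real n powr (- 3/4 + \<delta>1 / 2)"
proof (intro exI[of _ "pi * sqrt 3"] allI impI)
  fix n :: nat and Y :: "nat \<Rightarrow> int"
  assume n1: "n \<ge> 1" and "srw_path Y" and A: "event_A \<delta>1 \<delta>2 Y n"
  define N where "N = 2 * n - 1"
  define L where "L = (\<lambda>y. local_time Y N y)"
  define V where "V = {y. L y \<noteq> 0}"
  define R where "R = real n powr (1/2 + \<delta>1)"
  define b where "b = bn \<delta>2 \<delta>3 n"
  define S where "S = (\<Sum>y\<in>V. (real (L y))\<^sup>2)"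
  have nr: "real n \<ge> 1" using n1 by simp
  have A1: "\<And>k. k \<le> 2*n \<Longrightarrow> real_of_int \<bar>Y k\<bar> < R" using A unfolding event_A_def R_def by auto
  have A2: "\<And>y. real (L y) < real n powr (1/2 + \<delta>2)" using A unfolding event_A_def L_def N_def by auto
  have VY: "V = Y ` {0..N}"
  proof -
    have "L y \<noteq> 0 \<longleftrightarrow> y \<in> Y ` {0..N}" for y
      unfolding L_def local_time_def by auto
    then show ?thesis unfolding V_def by auto
  qed
  have finV: "finite V" using VY by simp
  have sumL: "(\<Sum>y\<in>V. real (L y)) = 2 * real n"
  proof -
    have "card {0..N} = (\<Sum>x\<in>{0..N}. (1::nat))" by (rule card_eq_sum)
    also have "\<dots> = (\<Sum>y\<in>Y ` {0..N}. (\<Sum>x\<in>{x. x \<in> {0..N} \<and> Y x = y}. (1::nat)))"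
      by (rule sum.image_gen) simp
    also have "\<dots> = (\<Sum>y\<in>Y ` {0..N}. card {x. x \<in> {0..N} \<and> Y x = y})"
      by simp
    finally have "card {0..N} = (\<Sum>y\<in>Y ` {0..N}. card {x. x \<in> {0..N} \<and> Y x = y})" .
    hence "card {0..N} = (\<Sum>y\<in>V. L y)" unfolding VY L_def local_time_def by simp
    moreover have "card {0..N} = 2 * n" unfolding N_def using n1 by simp
    ultimately have "(\<Sum>y\<in>V. L y) = 2 * n" by simp
    then show ?thesis by (metis of_nat_mult of_nat_numeral of_nat_sum)
  qed
  have R1: "R \<ge> 1" unfolding R_def using nr assms(1) by (intro ge_one_powr_ge_zero) auto
  have cardV: "real (card V) \<le> 3 * R"
  proof -
    define m where "m = \<lfloor>R\<rfloor>"
    have "V \<subseteq> {-m..m}"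
    proof
      fix y assume "y \<in> V"
      then obtain k where k: "k \<le> N" "y = Y k" using VY by auto
      have "k \<le> 2 * n" using k N_def by simp
      hence "real_of_int \<bar>y\<bar> < R" using A1 k by simp
      hence "\<bar>y\<bar> \<le> m" unfolding m_def by linarith
      then show "y \<in> {-m..m}" by (auto simp: abs_le_iff)
    qed
    hence "card V \<le> card {-m..m}" by (intro card_mono) auto
    hence "real (card V) \<le> real (nat (2*m+1))" by simp
    also have "\<dots> = 2 * real_of_int m + 1" using R1 unfolding m_def by simp
    also have "\<dots> \<le> 2 * R + 1" unfolding m_def by linarith
    finally show ?thesis using R1 by linarith
  qed
  have Vne: "V \<noteq> {}" using VY by auto
  have cardpos: "real (card V) > 0" using finV Vne by (simp add: card_gt_0_iff)
  have Slow: "S \<ge> 4 * (real n)^2 / (3 * R)"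
  proof -
    have "(2 * real n)^2 \<le> S * real (card V)"
      using sum_squared_le_sum_of_squares[of "\<lambda>y. real (L y)" V] sumL unfolding S_def by simp
    also have "\<dots> \<le> S * (3 * R)" using cardV unfolding S_def by (intro mult_left_mono) (auto intro: sum_nonneg)
    finally have "4 * (real n)^2 \<le> S * (3 * R)" by (simp add: power_mult_distrib)
    then show ?thesis using R1 by (simp add: divide_simps)
  qed
  have Spos: "S > 0"
  proof -
    have "4 * (real n)^2 / (3 * R) > 0" using nr R1 by simp
    then show ?thesis using Slow by linarith
  qed
  have b0: "b \<ge> 0" unfolding b_def bn_def d3_def by simp
  have small: "\<bar>real (L y) * t\<bar> \<le> 1" if t: "t \<in> {-b..b}" for y t
  proof -
    have tb: "\<bar>t\<bar> \<le> real n powr \<delta>2 / real n powr (1/2 + \<delta>3)" using t unfolding b_def bn_def d3_def by auto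
    have "\<bar>real (L y) * t\<bar> = real (L y) * \<bar>t\<bar>" by (simp add: abs_mult)
    also have "\<dots> \<le> real n powr (1/2 + \<delta>2) * (real n powr \<delta>2 / real n powr (1/2 + \<delta>3))"
      using A2[of y] tb by (intro mult_mono) auto
    also have "\<dots> = real n powr (2*\<delta>2 - \<delta>3)"
      using nr by (simp add: powr_add[symmetric] powr_diff[symmetric] algebra_simps)
    also have "\<dots> \<le> real n powr 0" using nr assms(4) by (intro powr_mono) auto
    finally show ?thesis using nr by simp
  qed
  define f where "f = (\<lambda>t. (\<Prod>y\<in>{y. local_time Y (2*n - 1) y \<noteq> 0}. cos (real (local_time Y (2*n - 1) y) * t))
          * exp (- (t^2 * (d3 \<delta>3 n)^2) / 2))"
  have fV: "f = (\<lambda>t. (\<Prod>y\<in>V. cos (real (L y) * t)) * exp (- (t^2 * (d3 \<delta>3 n)^2) / 2))"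
    unfolding f_def V_def L_def N_def ..
  define g where "g = (\<lambda>t. 1 / (1 + (S/4) * t^2))"
  have fint: "f integrable_on {-b..b}"
    unfolding fV by (intro integrable_continuous_interval continuous_intros) auto
  have gint: "g integrable_on {-b..b}" and gle: "integral {-b..b} g \<le> pi / sqrt (S/4)"
    using arctan_int_bound[of "S/4" b] Spos b0 unfolding g_def by auto
  have fg: "norm (f t) \<le> g t" if t: "t \<in> {-b..b}" for t
  proof -
    have "\<bar>\<Prod>y\<in>V. cos (real (L y) * t)\<bar> = (\<Prod>y\<in>V. \<bar>cos (real (L y) * t)\<bar>)" by (simp add: abs_prod)
    also have "\<dots> \<le> (\<Prod>y\<in>V. exp (- ((real (L y) * t)^2/4)))"
      using small[OF t] by (intro prod_mono) (auto intro: abs_cos_le_exp)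
    also have "\<dots> = exp (\<Sum>y\<in>V. - ((real (L y) * t)^2/4))" by (simp add: exp_sum finV)
    also have "(\<Sum>y\<in>V. - ((real (L y) * t)^2/4)) = - ((S/4) * t^2)"
      unfolding S_def by (simp add: power_mult_distrib sum_distrib_right sum_divide_distrib sum_negf)
    finally have p: "\<bar>\<Prod>y\<in>V. cos (real (L y) * t)\<bar> \<le> exp (- ((S/4) * t^2))" .
    have e1: "\<bar>exp (- (t^2 * (d3 \<delta>3 n)^2) / 2)\<bar> \<le> 1" by simp
    have "norm (f t) = \<bar>\<Prod>y\<in>V. cos (real (L y) * t)\<bar> * \<bar>exp (- (t^2 * (d3 \<delta>3 n)^2) / 2)\<bar>"
      unfolding fV by (simp add: abs_mult)
    also have "\<dots> \<le> exp (- ((S/4) * t^2)) * 1"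
      using p e1 by (intro mult_mono) auto
    also have "\<dots> \<le> g t"
    proof -
      have u0: "(S/4) * t^2 \<ge> 0" using Spos by simp
      have "1 + (S/4) * t^2 \<le> exp ((S/4) * t^2)" by (rule exp_ge_add_one_self)
      hence "inverse (exp ((S/4) * t^2)) \<le> inverse (1 + (S/4) * t^2)"
        using u0 by (intro le_imp_inverse_le) auto
      moreover have "exp (- ((S/4) * t^2)) = inverse (exp ((S/4) * t^2))" by (rule exp_minus)
      moreover have "g t = inverse (1 + (S/4) * t^2)" unfolding g_def by (rule inverse_eq_divide[symmetric])
      ultimately show ?thesis by simp
    qed
    finally show ?thesis .
  qed
  have I: "I0 \<delta>2 \<delta>3 Y n = integral {-b..b} f" unfolding I0_def f_def b_def ..
  have "\<bar>I0 \<delta>2 \<delta>3 Y n\<bar> \<le> integral {-b..b} g"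
    using integral_norm_bound_integral[OF fint gint fg] I by simp
  also have "\<dots> \<le> pi / sqrt (S/4)" by (rule gle)
  also have "\<dots> \<le> pi / sqrt ((real n)^2 / (3 * R))"
  proof -
    have x1: "(real n)^2 / (3 * R) \<le> S/4" using Slow by simp
    have x2: "(real n)^2 / (3 * R) > 0" using nr R1 by simp
    have s1: "sqrt ((real n)^2 / (3 * R)) \<le> sqrt (S/4)" using x1 by (rule real_sqrt_le_mono)
    have s2: "sqrt ((real n)^2 / (3 * R)) > 0" using x2 by simp
    have "0 < sqrt (S/4) * sqrt ((real n)^2 / (3 * R))" using s1 s2 by (intro mult_pos_pos) auto
    then show ?thesis using s1 pi_ge_zero by (intro divide_left_mono) auto
  qed
  also have "\<dots> = pi * sqrt 3 * (sqrt R / real n)"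
  proof -
    have "sqrt ((real n)^2 / (3 * R)) = real n / (sqrt 3 * sqrt R)"
      using nr R1 by (simp add: real_sqrt_divide real_sqrt_mult)
    then show ?thesis by simp
  qed
  also have "\<dots> = pi * sqrt 3 * real n powr (- 3/4 + \<delta>1 / 2)"
  proof -
    have "sqrt R = real n powr ((1/2 + \<delta>1) / 2)"
      unfolding R_def using nr by (simp add: powr_half_sqrt_powr)
    hence "sqrt R / real n = real n powr ((1/2 + \<delta>1) / 2) / real n powr 1" using nr by simp
    also have "\<dots> = real n powr ((1/2 + \<delta>1) / 2 - 1)" using nr by (simp add: powr_diff)
    also have "(1/2 + \<delta>1) / 2 - 1 = - 3/4 + \<delta>1 / 2" by (simp add: field_simps)
    finally show ?thesis by simp
  qed
  finally show "\<bar>I0 \<delta>2 \<delta>3 Y n\<bar> \<le> pi * sqrt 3 * real n powr (- 3/4 + \<delta>1 / 2)" .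
qed
end
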